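(* Let $G$ be a signed graph and $H$ a facet subgraph of $G$. Then exactly one component $G_1$ of $G$ is not a component of $H$ (i.e. all edges of $G\setminus H$ lie in $G_1$, and every component of $G$ other than $G_1$ is a component of $H$). Moreover, if the vertex set of $G_1$ is the union of the vertex sets of exactly two components $H_1,H_2$ of $H$, where $H_1$ is a bipartite component of $H$ that is not a component of $G$, then $G_1$ is bipartite if and only if $H_2$ is bipartite.
   Context: A signed graph $G$ on vertex set $\{1,\dots,n\}$ is a finite undirected graph, possibly with loops but without multiple edges, together with a sign function $\mathrm{sgn}:E(G)\to\{+1,-1\}$; an edge $ij$ of sign $\pm1$ is written $\pm ij$. Subgraphs are spanning: a subgraph $H$ of $G$ has vertex set $\{1,\dots,n\}$ and a subset of the edges of $G$ with the same signs; $G\setminus H$ denotes the set of edges of $G$ not in $H$. A component is a maximal connected subgraph (an isolated vertex is a component). A component is bipartite if its vertex set can be partitioned into sets $L,R$ (one possibly empty) with every edge of the component having exactly one endpoint in each (a component with a loop is not bipartite). $\mathrm{bicomp}(\cdot)$ is the number of bipartite components. A subgraph $H$ of $G$ is a facet subgraph if (1) $\mathrm{bicomp}(H)=\mathrm{bicomp}(G)+1$, and (2) for any bipartite component $H'$ of $H$ which is not a component of $G$, there is a bipartition $V(H')=L\cup R$ such that every edge $e\in G\setminus H$ is either a positive edge with at least one endpoint in $L$ and no endpoint in $R$, or a negative edge with at least one endpoint in $R$ and no endpoint in $L$. *)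

theory Defs
  imports Main
begin

text \<open>A signed graph on vertex set {1..n}: a set of signed edges (e, s), where e is an
  unordered pair of vertices given as a set of card 1 (loop) or 2, and s is the sign +1 or -1.
  No multiple edges: each vertex set e carries at most one sign.\<close>

type_synonym sedge = "nat set \<times> int"

definition signed_graph :: "nat \<Rightarrow> sedge set \<Rightarrow> bool" where
  "signed_graph n G \<longleftrightarrow>
     (\<forall>(e, s) \<in> G. e \<subseteq> {1..n} \<and> (card e = 1 \<or> card e = 2) \<and> (s = 1 \<or> s = -1)) \<and>
     (\<forall>e s s'. (e, s) \<in> G \<longrightarrow> (e, s') \<in> G \<longrightarrow> s = s')"

definition adj :: "sedge set \<Rightarrow> (nat \<times> nat) set" where
  "adj G = {(u, v). \<exists>s. ({u, v}, s) \<in> G}"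

text \<open>Vertex sets of the components of G (isolated vertices are components).\<close>
definition comps :: "nat \<Rightarrow> sedge set \<Rightarrow> nat set set" where
  "comps n G = {C. \<exists>v \<in> {1..n}. C = {w \<in> {1..n}. (v, w) \<in> (adj G)\<^sup>*}}"

definition edges_in :: "sedge set \<Rightarrow> nat set \<Rightarrow> sedge set" where
  "edges_in G C = {(e, s) \<in> G. e \<subseteq> C}"

definition comp_is_comp_of :: "nat \<Rightarrow> sedge set \<Rightarrow> nat set \<Rightarrow> sedge set \<Rightarrow> bool" where
  "comp_is_comp_of n A C B \<longleftrightarrow> C \<in> comps n B \<and> edges_in B C = edges_in A C"

definition is_bipartition :: "sedge set \<Rightarrow> nat set \<Rightarrow> nat set \<Rightarrow> nat set \<Rightarrow> bool" where
  "is_bipartition G C L R \<longleftrightarrow> L \<union> R = C \<and> L \<inter> R = {} \<and>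
     (\<forall>(e, s) \<in> edges_in G C. card (e \<inter> L) = 1 \<and> card (e \<inter> R) = 1)"

definition bip_comp :: "sedge set \<Rightarrow> nat set \<Rightarrow> bool" where
  "bip_comp G C \<longleftrightarrow> (\<exists>L R. is_bipartition G C L R)"

definition bicomp :: "nat \<Rightarrow> sedge set \<Rightarrow> nat" where
  "bicomp n G = card {C \<in> comps n G. bip_comp G C}"

definition facet_subgraph :: "nat \<Rightarrow> sedge set \<Rightarrow> sedge set \<Rightarrow> bool" where
  "facet_subgraph n G H \<longleftrightarrow> H \<subseteq> G \<and>
     bicomp n H = bicomp n G + 1 \<and>
     (\<forall>C \<in> comps n H. bip_comp H C \<and> \<not> comp_is_comp_of n H C G \<longrightarrow>
        (\<exists>L R. is_bipartition H C L R \<and>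
           (\<forall>(e, s) \<in> G - H.
              (s = 1 \<and> e \<inter> L \<noteq> {} \<and> e \<inter> R = {}) \<or>
              (s = -1 \<and> e \<inter> R \<noteq> {} \<and> e \<inter> L = {}))))"

end

theory Submission
  imports Defs
begin

definition cmp :: "nat \<Rightarrow> sedge set \<Rightarrow> nat \<Rightarrow> nat set" where
  "cmp n X v = {w \<in> {1..n}. (v, w) \<in> (adj X)\<^sup>*}"

lemma comps_cmp: "comps n X = cmp n X ` {1..n}"
  unfolding comps_def cmp_def by auto

lemma sym_adj: "sym (adj X)"
  unfolding sym_def adj_def by (auto simp: insert_commute)

lemma rtr_sym: "(u, v) \<in> (adj X)\<^sup>* \<Longrightarrow> (v, u) \<in> (adj X)\<^sup>*"
  using sym_rtrancl[OF sym_adj] unfolding sym_def by blast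

lemma cmp_eq: assumes "w \<in> cmp n X v" shows "cmp n X w = cmp n X v"
proof -
  have vw: "(v, w) \<in> (adj X)\<^sup>*" using assms by (simp add: cmp_def)
  hence wv: "(w, v) \<in> (adj X)\<^sup>*" by (rule rtr_sym)
  show ?thesis unfolding cmp_def using vw wv by (meson rtrancl_trans)
qed

lemma comps_disj: "C \<in> comps n X \<Longrightarrow> C' \<in> comps n X \<Longrightarrow> x \<in> C \<Longrightarrow> x \<in> C' \<Longrightarrow> C = C'"
  unfolding comps_cmp using cmp_eq by (metis imageE)

lemma cmp_self: "v \<in> {1..n} \<Longrightarrow> v \<in> cmp n X v" by (simp add: cmp_def)

lemma comps_ne: "C \<in> comps n X \<Longrightarrow> C \<noteq> {}"
  unfolding comps_cmp using cmp_self by (metis empty_iff imageE)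

lemma finite_comps: "finite (comps n X)" unfolding comps_cmp by simp

lemma adj_mono: "H \<subseteq> G \<Longrightarrow> adj H \<subseteq> adj G" unfolding adj_def by auto

lemma cmp_mono: "H \<subseteq> G \<Longrightarrow> cmp n H v \<subseteq> cmp n G v"
  unfolding cmp_def using rtrancl_mono[OF adj_mono] by blast

lemma sub_comp: "H \<subseteq> G \<Longrightarrow> D \<in> comps n H \<Longrightarrow> \<exists>C\<in>comps n G. D \<subseteq> C"
proof -
  assume HG: "H \<subseteq> G" and D: "D \<in> comps n H"
  then obtain v where v: "v \<in> {1..n}" "D = cmp n H v" unfolding comps_cmp by blast
  have "cmp n G v \<in> comps n G" using v(1) unfolding comps_cmp by blast
  thus ?thesis using cmp_mono[OF HG, of n v] v by blast
qed

lemma edge_sub: "signed_graph n G \<Longrightarrow> (e, s) \<in> G \<Longrightarrow> e \<subseteq> {1..n}"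
  unfolding signed_graph_def by auto

lemma edge_two: assumes "signed_graph n G" "(e, s) \<in> G"
  shows "\<exists>a b. e = {a, b} \<and> a \<in> {1..n} \<and> b \<in> {1..n}"
proof -
  have "e \<subseteq> {1..n}" "card e = 1 \<or> card e = 2" using assms unfolding signed_graph_def by auto
  note c = this(2)
  have "\<exists>a b. e = {a, b}"
  proof (cases "card e = 1")
    case True then obtain a where "e = {a}" by (auto simp: card_1_singleton_iff)
    thus ?thesis by blast
  next
    case False then have "card e = 2" using c by simp
    then obtain a b where "e = {a, b}" by (auto simp: card_2_iff)
    thus ?thesis by blast
  qed
  then obtain a b where "e = {a, b}" by blast
  thus ?thesis using \<open>e \<subseteq> {1..n}\<close> by auto
qed

lemma edge_in_comp: assumes "signed_graph n G" "(e, s) \<in> G"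
  shows "\<exists>C\<in>comps n G. e \<subseteq> C"
proof -
  obtain a b where ab: "e = {a, b}" "a \<in> {1..n}" "b \<in> {1..n}" using edge_two[OF assms] by blast
  have "(a, b) \<in> adj G" using assms(2) ab unfolding adj_def by auto
  hence "e \<subseteq> cmp n G a" using ab unfolding cmp_def by auto
  thus ?thesis using ab unfolding comps_cmp by blast
qed

lemma good_char: assumes sg: "signed_graph n G" and HG: "H \<subseteq> G" and C: "C \<in> comps n G"
  shows "(C \<in> comps n H \<and> edges_in H C = edges_in G C) \<longleftrightarrow> \<not>(\<exists>(e, s)\<in>G - H. e \<subseteq> C)"
proof
  assume "C \<in> comps n H \<and> edges_in H C = edges_in G C"
  thus "\<not>(\<exists>(e, s)\<in>G - H. e \<subseteq> C)" unfolding edges_in_def by blast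
next
  assume no: "\<not>(\<exists>(e, s)\<in>G - H. e \<subseteq> C)"
  have ed: "edges_in H C = edges_in G C" using no HG unfolding edges_in_def by blast
  obtain v where v: "v \<in> {1..n}" "C = cmp n G v" using C unfolding comps_cmp by blast
  have "cmp n G v \<subseteq> cmp n H v"
  proof
    fix w assume "w \<in> cmp n G v"
    hence w: "(v, w) \<in> (adj G)\<^sup>*" "w \<in> {1..n}" unfolding cmp_def by auto
    have "(v, w) \<in> (adj H)\<^sup>*" using w(1)
    proof (induction rule: rtrancl_induct)
      case base thus ?case by simp
    next
      case (step x y)
      then obtain s where xy: "({x, y}, s) \<in> G" unfolding adj_def by blast
      have xy1: "x \<in> {1..n}" "y \<in> {1..n}" using edge_sub[OF sg xy] by auto
      have "x \<in> C" using xy1 step(1) v unfolding cmp_def by auto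
      moreover have "y \<in> C" using xy1 step(1,2) v unfolding cmp_def
        by (auto intro: rtrancl_into_rtrancl)
      ultimately have sub: "{x, y} \<subseteq> C" by simp
      have "({x, y}, s) \<in> H"
      proof (rule ccontr)
        assume "({x, y}, s) \<notin> H"
        hence "({x, y}, s) \<in> G - H" using xy by simp
        hence "\<exists>(e, s)\<in>G - H. e \<subseteq> C" using sub by (intro bexI[of _ "({x, y}, s)"]) auto
        thus False using no by simp
      qed
      hence "(x, y) \<in> adj H" unfolding adj_def by blast
      thus ?case using step(3) by (meson rtrancl_into_rtrancl)
    qed
    thus "w \<in> cmp n H v" using w unfolding cmp_def by auto
  qed
  hence "C = cmp n H v" using cmp_mono[OF HG] v by blast
  hence "C \<in> comps n H" using v unfolding comps_cmp by blast
  thus "C \<in> comps n H \<and> edges_in H C = edges_in G C" using ed by blast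
qed

lemma bip_cong: "edges_in A C = edges_in B C \<Longrightarrow> bip_comp A C = bip_comp B C"
  unfolding bip_comp_def is_bipartition_def by simp

theorem mainTheorem4:
  assumes "signed_graph n G"
    and "facet_subgraph n G H"
  shows "(\<exists>!C1. C1 \<in> comps n G \<and> \<not> comp_is_comp_of n G C1 H) \<and>
         (\<forall>C1 \<in> comps n G. \<not> comp_is_comp_of n G C1 H \<longrightarrow>
           (\<forall>(e, s) \<in> G - H. e \<subseteq> C1) \<and>
           (\<forall>H1 H2. H1 \<in> comps n H \<and> H2 \<in> comps n H \<and> H1 \<noteq> H2 \<and> C1 = H1 \<union> H2 \<and>
              bip_comp H H1 \<and> \<not> comp_is_comp_of n H H1 G \<longrightarrow>
              (bip_comp G C1 \<longleftrightarrow> bip_comp H H2)))"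
proof -
  note sg = assms(1)
  have HG: "H \<subseteq> G" and cnt: "bicomp n H = bicomp n G + 1"
    using assms(2) unfolding facet_subgraph_def by auto
  define BH where "BH = {D \<in> comps n H. bip_comp H D}"
  define BG where "BG = {D \<in> comps n G. bip_comp G D}"
  define X where "X = {D \<in> BH. \<not> comp_is_comp_of n H D G}"
  define Y where "Y = {C \<in> BG. \<not> comp_is_comp_of n G C H}"
  have finBH: "finite BH" unfolding BH_def using finite_comps by simp
  have finBG: "finite BG" unfolding BG_def using finite_comps by simp
  have eq: "BH - X = BG - Y"
    unfolding BH_def BG_def X_def Y_def comp_is_comp_of_def
  proof (intro set_eqI iffI)
    fix D assume "D \<in> {D \<in> comps n H. bip_comp H D} -
      {D \<in> {D \<in> comps n H. bip_comp H D}. \<not> (D \<in> comps n G \<and> edges_in G D = edges_in H D)}"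
    thus "D \<in> {D \<in> comps n G. bip_comp G D} -
      {C \<in> {D \<in> comps n G. bip_comp G D}. \<not> (C \<in> comps n H \<and> edges_in H C = edges_in G C)}"
      using bip_cong[of G D H] by auto
  next
    fix D assume "D \<in> {D \<in> comps n G. bip_comp G D} -
      {C \<in> {D \<in> comps n G. bip_comp G D}. \<not> (C \<in> comps n H \<and> edges_in H C = edges_in G C)}"
    thus "D \<in> {D \<in> comps n H. bip_comp H D} -
      {D \<in> {D \<in> comps n H. bip_comp H D}. \<not> (D \<in> comps n G \<and> edges_in G D = edges_in H D)}"
      using bip_cong[of G D H] by auto
  qed
  have XB: "X \<subseteq> BH" "Y \<subseteq> BG" unfolding X_def Y_def by auto
  have "card (BH - X) = card BH - card X" by (rule card_Diff_subset) (use XB finBH finite_subset in auto)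
  moreover have "card (BG - Y) = card BG - card Y" by (rule card_Diff_subset) (use XB finBG finite_subset in auto)
  moreover have "card X \<le> card BH" "card Y \<le> card BG" using XB finBH finBG card_mono by auto
  moreover have "card BH = card BG + 1" using cnt unfolding bicomp_def BH_def BG_def .
  ultimately have cXY: "card X = card Y + 1" using eq by simp
  have finX: "finite X" using XB finBH finite_subset by auto
  have finY: "finite Y" using XB finBG finite_subset by auto
  have kX: "e \<inter> D \<noteq> {}" if D: "D \<in> X" and es: "(e, s) \<in> G - H" for D e s
  proof -
    have "D \<in> comps n H" "bip_comp H D" "\<not> comp_is_comp_of n H D G"
      using D unfolding X_def BH_def by auto
    then obtain L R where LR: "is_bipartition H D L R" and
      ed: "\<forall>(e, s) \<in> G - H. (s = 1 \<and> e \<inter> L \<noteq> {} \<and> e \<inter> R = {}) \<or>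
              (s = -1 \<and> e \<inter> R \<noteq> {} \<and> e \<inter> L = {})"
      using assms(2) unfolding facet_subgraph_def by blast
    have "L \<union> R = D" using LR unfolding is_bipartition_def by auto
    thus ?thesis using ed es by blast
  qed
  have kX2: "\<exists>C\<in>comps n G. D \<subseteq> C \<and> \<not> comp_is_comp_of n G C H" if D: "D \<in> X" for D
  proof -
    have Dc: "D \<in> comps n H" "\<not> comp_is_comp_of n H D G"
      using D unfolding X_def BH_def by auto
    obtain C where C: "C \<in> comps n G" "D \<subseteq> C" using sub_comp[OF HG Dc(1)] by blast
    have "\<not> comp_is_comp_of n G C H"
    proof
      assume g: "comp_is_comp_of n G C H"
      obtain x where "x \<in> D" using comps_ne[OF Dc(1)] by blast
      hence "D = C" using comps_disj[OF Dc(1), of C x] g C unfolding comp_is_comp_of_def by auto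
      thus False using Dc g C unfolding comp_is_comp_of_def by auto
    qed
    thus ?thesis using C by blast
  qed
  have bad: "\<exists>(e, s)\<in>G - H. e \<subseteq> C" if "C \<in> comps n G" "\<not> comp_is_comp_of n G C H" for C
    using good_char[OF sg HG that(1)] that(2) unfolding comp_is_comp_of_def by auto
  have "X \<noteq> {}" using cXY by auto
  then obtain D0 where D0: "D0 \<in> X" by blast
  obtain C0 where C0: "C0 \<in> comps n G" "D0 \<subseteq> C0" "\<not> comp_is_comp_of n G C0 H"
    using kX2[OF D0] by blast
  have uniq: "C = C0" if CC: "C \<in> comps n G" "\<not> comp_is_comp_of n G C H" for C
  proof -
    obtain e s where es: "(e, s) \<in> G - H" "e \<subseteq> C" using bad[OF CC] by blast
    obtain x where "x \<in> e" "x \<in> D0" using kX[OF D0 es(1)] by blast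
    thus ?thesis using comps_disj[OF CC(1) C0(1), of x] es C0 by auto
  qed
  have part1: "\<exists>!C1. C1 \<in> comps n G \<and> \<not> comp_is_comp_of n G C1 H"
    using C0 uniq by blast
  have part2: "(\<forall>(e, s) \<in> G - H. e \<subseteq> C1) \<and>
           (\<forall>H1 H2. H1 \<in> comps n H \<and> H2 \<in> comps n H \<and> H1 \<noteq> H2 \<and> C1 = H1 \<union> H2 \<and>
              bip_comp H H1 \<and> \<not> comp_is_comp_of n H H1 G \<longrightarrow>
              (bip_comp G C1 \<longleftrightarrow> bip_comp H H2))"
    if C1: "C1 \<in> comps n G" "\<not> comp_is_comp_of n G C1 H" for C1
  proof -
    have C10: "C1 = C0" using uniq[OF C1] .
    have a: "\<forall>(e, s) \<in> G - H. e \<subseteq> C1"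
    proof (clarify)
      fix e s x assume es: "(e, s) \<in> G" "(e, s) \<notin> H" and x: "x \<in> e"
      obtain C where C: "C \<in> comps n G" "e \<subseteq> C" using edge_in_comp[OF sg es(1)] by blast
      have "\<not> comp_is_comp_of n G C H"
        using good_char[OF sg HG C(1)] es C unfolding comp_is_comp_of_def by auto
      hence "C = C1" using uniq[OF C(1)] C10 by simp
      thus "x \<in> C1" using C x by auto
    qed
    have b: "bip_comp G C1 \<longleftrightarrow> bip_comp H H2"
      if H: "H1 \<in> comps n H" "H2 \<in> comps n H" "H1 \<noteq> H2" "C1 = H1 \<union> H2"
        "bip_comp H H1" "\<not> comp_is_comp_of n H H1 G" for H1 H2
    proof -
      have XS: "X \<subseteq> {H1, H2}"
      proof
        fix D assume D: "D \<in> X"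
        obtain C where C: "C \<in> comps n G" "D \<subseteq> C" "\<not> comp_is_comp_of n G C H"
          using kX2[OF D] by blast
        have "C = C1" using uniq[OF C(1) C(3)] C10 by simp
        have Dc: "D \<in> comps n H" using D unfolding X_def BH_def by auto
        obtain x where x: "x \<in> D" using comps_ne[OF Dc] by blast
        hence "x \<in> H1 \<or> x \<in> H2" using C \<open>C = C1\<close> H(4) by auto
        thus "D \<in> {H1, H2}" using comps_disj[OF Dc H(1) x] comps_disj[OF Dc H(2) x] by auto
      qed
      have H1X: "H1 \<in> X" using H unfolding X_def BH_def by auto
      have H2n: "\<not> comp_is_comp_of n H H2 G"
      proof
        assume "comp_is_comp_of n H H2 G"
        hence H2G: "H2 \<in> comps n G" unfolding comp_is_comp_of_def by auto
        obtain x where x: "x \<in> H2" using comps_ne[OF H(2)] by blast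
        have "H2 = C1" using comps_disj[OF H2G C1(1) x] x H(4) by auto
        obtain y where y: "y \<in> H1" using comps_ne[OF H(1)] by blast
        hence "y \<in> H2" using \<open>H2 = C1\<close> H(4) by auto
        thus False using comps_disj[OF H(1) H(2) y] H(3) by auto
      qed
      have H2X: "H2 \<in> X \<longleftrightarrow> bip_comp H H2" using H(2) H2n unfolding X_def BH_def by auto
      have YS: "Y \<subseteq> {C1}"
      proof
        fix C assume "C \<in> Y"
        hence "C \<in> comps n G" "\<not> comp_is_comp_of n G C H" unfolding Y_def BG_def by auto
        thus "C \<in> {C1}" using uniq C10 by auto
      qed
      have C1Y: "C1 \<in> Y \<longleftrightarrow> bip_comp G C1" using C1 unfolding Y_def BG_def by auto
      show ?thesis
      proof (cases "bip_comp H H2")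
        case True
        hence "X = {H1, H2}" using XS H1X H2X by auto
        hence "card X = 2" using H(3) by auto
        hence "card Y = 1" using cXY by simp
        hence "Y \<noteq> {}" by auto
        hence "C1 \<in> Y" using YS by auto
        thus ?thesis using C1Y True by simp
      next
        case False
        hence "X = {H1}" using XS H1X H2X by auto
        hence "card Y = 0" using cXY by simp
        hence "Y = {}" using finY by simp
        thus ?thesis using C1Y False by simp
      qed
    qed
    show ?thesis using a b by blast
  qed
  show ?thesis using part1 part2 by blast
qed

end
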